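(* For an integer sequence $(S_n)_{n\ge0}$, integers $k\ge1$ and $n\ge0$, set $\sigma_S(k,n) = \sum_{i=1}^{k} S_{n+i}$. Then for all $k \geq 1$ and $n \geq 0$: (1) $\sigma_P(k,n) = \tfrac12(Q_{n+k+1}-Q_{n+1})$, and this equals $2P_{k/2}P_{k/2+n+1}$ if $k\equiv 0 \pmod 4$ and $Q_{k/2}Q_{k/2+n+1}$ if $k \equiv 2 \pmod 4$; (2) $\sigma_Q(k,n) = P_{n+k+1}-P_{n+1}$, and this equals $2P_{k/2}Q_{k/2+n+1}$ if $k\equiv 0 \pmod 4$ and $2Q_{k/2}P_{k/2+n+1}$ if $k \equiv 2 \pmod 4$; (3) $\sigma_B(k,n) = \tfrac14(P_{2k+2n+1}-P_{2n+1})$, and this equals $\tfrac12 P_k Q_{k+2n+1}$ if $k$ is even and $\tfrac12 Q_k P_{k+2n+1}$ if $k$ is odd; (4) $\sigma_C(k,n) = \tfrac12(Q_{2k+2n+1}-Q_{2n+1})$, and this equals $2P_kP_{k+2n+1}$ if $k$ is even and $Q_kQ_{k+2n+1}$ if $k$ is odd; (5) $\sigma_c(k,n) = \tfrac12(Q_{2k+2n}-Q_{2n})$, and this equals $2P_kP_{k+2n}$ if $k$ is even and $Q_kQ_{k+2n}$ if $k$ is odd.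
   Context: The Pell sequence $(P_n)_{n\ge0}$: $P_0=0$, $P_1=1$, $P_n = 2P_{n-1}+P_{n-2}$. The associated Pell sequence $(Q_n)_{n\ge0}$: $Q_0=1$, $Q_1=1$, $Q_n=2Q_{n-1}+Q_{n-2}$. The balancing sequence $(B_n)_{n\ge0}$: $B_0=0$, $B_1=1$, $B_n=6B_{n-1}-B_{n-2}$. The Lucas-balancing sequence $(C_n)_{n\ge0}$: $C_0=1$, $C_1=3$, $C_n=6C_{n-1}-C_{n-2}$. The Lucas-cobalancing sequence $(c_n)_{n\ge0}$: $c_0=-1$, $c_1=1$, $c_n=6c_{n-1}-c_{n-2}$. *)

theory Defs
  imports Complex_Main
begin

fun pell :: "nat \<Rightarrow> int" where
  "pell 0 = 0"
| "pell (Suc 0) = 1"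
| "pell (Suc (Suc n)) = 2 * pell (Suc n) + pell n"

fun apell :: "nat \<Rightarrow> int" where
  "apell 0 = 1"
| "apell (Suc 0) = 1"
| "apell (Suc (Suc n)) = 2 * apell (Suc n) + apell n"

fun bal :: "nat \<Rightarrow> int" where
  "bal 0 = 0"
| "bal (Suc 0) = 1"
| "bal (Suc (Suc n)) = 6 * bal (Suc n) - bal n"

fun lbal :: "nat \<Rightarrow> int" where
  "lbal 0 = 1"
| "lbal (Suc 0) = 3"
| "lbal (Suc (Suc n)) = 6 * lbal (Suc n) - lbal n"

fun lcobal :: "nat \<Rightarrow> int" where
  "lcobal 0 = -1"
| "lcobal (Suc 0) = 1"
| "lcobal (Suc (Suc n)) = 6 * lcobal (Suc n) - lcobal n"

definition sigma :: "(nat \<Rightarrow> int) \<Rightarrow> nat \<Rightarrow> nat \<Rightarrow> int" where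
  "sigma S k n = (\<Sum>i=1..k. S (n + i))"

end

theory Submission
  imports Defs
begin

lemma pq_step: "pell (Suc m) = pell m + apell m \<and> apell (Suc m) = apell m + 2 * pell m"
proof (induction m)
  case 0 then show ?case by simp
next
  case (Suc m) then show ?case by simp
qed

lemma P_Suc: "pell (Suc m) = pell m + apell m" using pq_step by blast
lemma Q_Suc: "apell (Suc m) = apell m + 2 * pell m" using pq_step by blast

lemma add_formula: "pell (m + y) = pell m * apell y + apell m * pell y \<and>
   apell (m + y) = apell m * apell y + 2 * pell m * pell y"
proof (induction y)
  case 0 then show ?case by simp
next
  case (Suc y)
  have e1: "pell (m + Suc y) = pell (m+y) + apell (m+y)"
    by (simp only: add_Suc_right P_Suc)
  have e2: "apell (m + Suc y) = apell (m+y) + 2 * pell (m+y)"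
    by (simp only: add_Suc_right Q_Suc)
  have e3: "pell (Suc y) = pell y + apell y" by (rule P_Suc)
  have e4: "apell (Suc y) = apell y + 2 * pell y" by (rule Q_Suc)
  from Suc.IH have i1: "pell (m + y) = pell m * apell y + apell m * pell y"
    and i2: "apell (m + y) = apell m * apell y + 2 * pell m * pell y" by auto
  show ?case unfolding e1 e2 e3 e4 i1 i2 by (simp add: algebra_simps)
qed

lemma sub_formula: "(-1)^y * pell m = pell (m+y) * apell y - apell (m+y) * pell y \<and>
   (-1)^y * apell m = apell (m+y) * apell y - 2 * pell (m+y) * pell y"
proof (induction y)
  case 0 then show ?case by simp
next
  case (Suc y)
  have e1: "pell (m + Suc y) = pell (m+y) + apell (m+y)"
    by (simp only: add_Suc_right P_Suc)
  have e2: "apell (m + Suc y) = apell (m+y) + 2 * pell (m+y)"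
    by (simp only: add_Suc_right Q_Suc)
  have e3: "pell (Suc y) = pell y + apell y" by (rule P_Suc)
  have e4: "apell (Suc y) = apell y + 2 * pell y" by (rule Q_Suc)
  have s: "(-1::int)^Suc y = - ((-1)^y)" by simp
  from Suc.IH have i1: "(-1)^y * pell m = pell (m+y) * apell y - apell (m+y) * pell y"
    and i2: "(-1)^y * apell m = apell (m+y) * apell y - 2 * pell (m+y) * pell y" by auto
  have "(-1)^Suc y * pell m = pell (m + Suc y) * apell (Suc y) - apell (m + Suc y) * pell (Suc y)"
    using i1 unfolding e1 e2 e3 e4 s by (simp add: algebra_simps)
  moreover have "(-1)^Suc y * apell m = apell (m + Suc y) * apell (Suc y) - 2 * pell (m + Suc y) * pell (Suc y)"
    using i2 unfolding e1 e2 e3 e4 s by (simp add: algebra_simps)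
  ultimately show ?case by blast
qed

lemma addQ: "apell (m + 2*y) = apell (m+y) * apell y + 2 * pell (m+y) * pell y"
  and addP: "pell (m + 2*y) = pell (m+y) * apell y + apell (m+y) * pell y"
proof -
  have "m + 2*y = (m+y) + y" by simp
  then show "apell (m + 2*y) = apell (m+y) * apell y + 2 * pell (m+y) * pell y"
    "pell (m + 2*y) = pell (m+y) * apell y + apell (m+y) * pell y"
    using add_formula[of "m+y" y] by metis+
qed

lemma LQ: "apell (m + 2*y) - (-1)^y * apell m = 4 * pell (m+y) * pell y"
     "apell (m + 2*y) + (-1)^y * apell m = 2 * apell (m+y) * apell y"
  using addQ[of m y] sub_formula[of y m] by linarith+

lemma LP: "pell (m + 2*y) - (-1)^y * pell m = 2 * apell (m+y) * pell y"
     "pell (m + 2*y) + (-1)^y * pell m = 2 * pell (m+y) * apell y"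
  using addP[of m y] sub_formula[of y m] by linarith+

lemma sigma_Suc: "sigma S (Suc k) n = sigma S k n + S (n + Suc k)"
  unfolding sigma_def by simp

lemma sigma_0: "sigma S 0 n = 0"
  unfolding sigma_def by simp

lemma P4: "pell (j+4) = 6 * pell (j+2) - pell j"
  by (simp add: numeral_eq_Suc)
lemma Q4: "apell (j+4) = 6 * apell (j+2) - apell j"
  by (simp add: numeral_eq_Suc)

lemma bal_pell: "2 * bal m = pell (2*m)"
proof (induction m rule: bal.induct)
  case (3 n)
  have "pell (2 * Suc (Suc n)) = 6 * pell (2*n+2) - pell (2*n)"
    using P4[of "2*n"] by (simp add: algebra_simps)
  also have "2*n+2 = 2 * Suc n" by simp
  finally show ?case using 3 by simp
qed (simp_all add: numeral_eq_Suc)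

lemma lbal_apell: "lbal m = apell (2*m)"
proof (induction m rule: lbal.induct)
  case (3 n)
  have "apell (2 * Suc (Suc n)) = 6 * apell (2*n+2) - apell (2*n)"
    using Q4[of "2*n"] by (simp add: algebra_simps)
  also have "2*n+2 = 2 * Suc n" by simp
  finally show ?case using 3 by simp
qed (simp_all add: numeral_eq_Suc)

lemma lcobal_apell: "lcobal (Suc m) = apell (2*m+1)"
proof (induction m rule: nat_less_induct)
  case (1 m)
  show ?case
  proof (cases m)
    case 0 then show ?thesis by simp
  next
    case (Suc m')
    show ?thesis
    proof (cases m')
      case 0 then show ?thesis using Suc by (simp add: numeral_eq_Suc)
    next
      case (Suc m'')
      have "lcobal (Suc m) = 6 * lcobal (Suc m') - lcobal (Suc m'')"
        using \<open>m = Suc m'\<close> Suc by simp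
      also have "\<dots> = 6 * apell (2*m'+1) - apell (2*m''+1)"
      proof -
        have "lcobal (Suc m') = apell (2*m'+1)" using 1 \<open>m = Suc m'\<close> by blast
        moreover have "lcobal (Suc m'') = apell (2*m''+1)" using 1 \<open>m = Suc m'\<close> Suc by simp
        ultimately show ?thesis by (simp del: lcobal.simps apell.simps)
      qed
      also have "\<dots> = apell (2*m''+1+4)"
        using Q4[of "2*m''+1"] Suc by (simp add: algebra_simps)
      also have "2*m''+1+4 = 2*m+1" using \<open>m = Suc m'\<close> Suc by simp
      finally show ?thesis .
    qed
  qed
qed

lemma sumP: "2 * sigma pell k n = apell (n+k+1) - apell (n+1)"
proof (induction k)
  case (Suc k)
  then show ?case using P_Suc[of "n+k"] Q_Suc[of "n+k"] by (simp add: sigma_Suc)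
qed (simp add: sigma_0)

lemma sumQ: "sigma apell k n = pell (n+k+1) - pell (n+1)"
proof (induction k)
  case (Suc k)
  then show ?case using P_Suc[of "n+k"] Q_Suc[of "n+k"] by (simp add: sigma_Suc)
qed (simp add: sigma_0)

lemma sumB: "4 * sigma bal k n = pell (2*k+2*n+1) - pell (2*n+1)"
proof (induction k)
  case 0 then show ?case by (simp add: sigma_0)
next
  case (Suc k)
  have "pell (2*(Suc k)+2*n+1) = 2 * pell (2*(n + Suc k)) + pell (2*k+2*n+1)"
    by (simp add: algebra_simps numeral_eq_Suc)
  then show ?case using Suc bal_pell[of "n + Suc k"] by (simp add: sigma_Suc algebra_simps)
qed

lemma sumC: "2 * sigma lbal k n = apell (2*k+2*n+1) - apell (2*n+1)"
proof (induction k)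
  case 0 then show ?case by (simp add: sigma_0)
next
  case (Suc k)
  have "apell (2*(Suc k)+2*n+1) = 2 * apell (2*(n + Suc k)) + apell (2*k+2*n+1)"
    by (simp add: algebra_simps numeral_eq_Suc)
  then show ?case using Suc lbal_apell[of "n + Suc k"] by (simp add: sigma_Suc algebra_simps)
qed

lemma sumc: "2 * sigma lcobal k n = apell (2*k+2*n) - apell (2*n)"
proof (induction k)
  case 0 then show ?case by (simp add: sigma_0)
next
  case (Suc k)
  have "apell (2*(Suc k)+2*n) = 2 * apell (2*(n + k)+1) + apell (2*k+2*n)"
    by (simp add: algebra_simps numeral_eq_Suc)
  then show ?case using Suc lcobal_apell[of "n + k"] by (simp add: sigma_Suc algebra_simps)
qed


lemma LQe: "even y \<Longrightarrow> apell (m + 2*y) - apell m = 4 * pell (m+y) * pell y"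
  using LQ(1)[of m y] by simp
lemma LQo: "odd y \<Longrightarrow> apell (m + 2*y) - apell m = 2 * apell (m+y) * apell y"
  using LQ(2)[of m y] by simp
lemma LPe: "even y \<Longrightarrow> pell (m + 2*y) - pell m = 2 * apell (m+y) * pell y"
  using LP(1)[of m y] by simp
lemma LPo: "odd y \<Longrightarrow> pell (m + 2*y) - pell m = 2 * pell (m+y) * apell y"
  using LP(2)[of m y] by simp

theorem theorem14:
  fixes k n :: nat
  assumes "k \<ge> 1"
  shows
   "(real_of_int (sigma pell k n) = (apell (n+k+1) - apell (n+1)) / 2
    \<and> (k mod 4 = 0 \<longrightarrow> sigma pell k n = 2 * pell (k div 2) * pell (k div 2 + n + 1))
    \<and> (k mod 4 = 2 \<longrightarrow> sigma pell k n = apell (k div 2) * apell (k div 2 + n + 1)))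
    \<and> (sigma apell k n = pell (n+k+1) - pell (n+1)
    \<and> (k mod 4 = 0 \<longrightarrow> sigma apell k n = 2 * pell (k div 2) * apell (k div 2 + n + 1))
    \<and> (k mod 4 = 2 \<longrightarrow> sigma apell k n = 2 * apell (k div 2) * pell (k div 2 + n + 1)))
    \<and> (real_of_int (sigma bal k n) = (pell (2*k+2*n+1) - pell (2*n+1)) / 4
    \<and> (even k \<longrightarrow> real_of_int (sigma bal k n) = pell k * apell (k+2*n+1) / 2)
    \<and> (odd k \<longrightarrow> real_of_int (sigma bal k n) = apell k * pell (k+2*n+1) / 2))
    \<and> (real_of_int (sigma lbal k n) = (apell (2*k+2*n+1) - apell (2*n+1)) / 2
    \<and> (even k \<longrightarrow> sigma lbal k n = 2 * pell k * pell (k+2*n+1))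
    \<and> (odd k \<longrightarrow> sigma lbal k n = apell k * apell (k+2*n+1)))
    \<and> (real_of_int (sigma lcobal k n) = (apell (2*k+2*n) - apell (2*n)) / 2
    \<and> (even k \<longrightarrow> sigma lcobal k n = 2 * pell k * pell (k+2*n))
    \<and> (odd k \<longrightarrow> sigma lcobal k n = apell k * apell (k+2*n)))"
proof -
  define h where "h = k div 2"
  have P: "2 * sigma pell k n = apell (n+1 + 2*h) - apell (n+1)" if "even k"
    using sumP[of k n] that h_def by (simp add: algebra_simps)
  have Q: "sigma apell k n = pell (n+1 + 2*h) - pell (n+1)" if "even k"
    using sumQ[of k n] that h_def by (simp add: algebra_simps)
  have e4: "even k \<and> even h" if "k mod 4 = 0" using that h_def by presburger
  have o4: "even k \<and> odd h" if "k mod 4 = 2" using that h_def by presburger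
  have B: "4 * sigma bal k n = pell (2*n+1 + 2*k) - pell (2*n+1)"
    using sumB[of k n] by (simp add: algebra_simps)
  have C: "2 * sigma lbal k n = apell (2*n+1 + 2*k) - apell (2*n+1)"
    using sumC[of k n] by (simp add: algebra_simps)
  have c: "2 * sigma lcobal k n = apell (2*n + 2*k) - apell (2*n)"
    using sumc[of k n] by (simp add: algebra_simps)
  have r1: "real_of_int (sigma pell k n) = (apell (n+k+1) - apell (n+1)) / 2"
  proof -
    have "real_of_int (2 * sigma pell k n) = real_of_int (apell (n+k+1) - apell (n+1))"
      using sumP[of k n] by simp
    then show ?thesis by simp
  qed
  have r3: "real_of_int (sigma bal k n) = (pell (2*k+2*n+1) - pell (2*n+1)) / 4"
  proof -
    have "real_of_int (4 * sigma bal k n) = real_of_int (pell (2*k+2*n+1) - pell (2*n+1))"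
      using sumB[of k n] by simp
    then show ?thesis by simp
  qed
  have r4: "real_of_int (sigma lbal k n) = (apell (2*k+2*n+1) - apell (2*n+1)) / 2"
  proof -
    have "real_of_int (2 * sigma lbal k n) = real_of_int (apell (2*k+2*n+1) - apell (2*n+1))"
      using sumC[of k n] by simp
    then show ?thesis by simp
  qed
  have r5: "real_of_int (sigma lcobal k n) = (apell (2*k+2*n) - apell (2*n)) / 2"
  proof -
    have "real_of_int (2 * sigma lcobal k n) = real_of_int (apell (2*k+2*n) - apell (2*n))"
      using sumc[of k n] by simp
    then show ?thesis by simp
  qed
  have p0: "sigma pell k n = 2 * pell h * pell (h + n + 1)" if "k mod 4 = 0"
    using P e4[OF that] LQe[of h "n+1"] by (simp add: algebra_simps)
  have p2: "sigma pell k n = apell h * apell (h + n + 1)" if "k mod 4 = 2"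
    using P o4[OF that] LQo[of h "n+1"] by (simp add: algebra_simps)
  have q0: "sigma apell k n = 2 * pell h * apell (h + n + 1)" if "k mod 4 = 0"
    using Q e4[OF that] LPe[of h "n+1"] by (simp add: algebra_simps)
  have q2: "sigma apell k n = 2 * apell h * pell (h + n + 1)" if "k mod 4 = 2"
    using Q o4[OF that] LPo[of h "n+1"] by (simp add: algebra_simps)
  have be: "real_of_int (sigma bal k n) = pell k * apell (k+2*n+1) / 2" if "even k"
  proof -
    have "4 * sigma bal k n = 2 * (pell k * apell (k+2*n+1))"
      using B LPe[OF that, of "2*n+1"] by (simp add: algebra_simps)
    then have "real_of_int (4 * sigma bal k n) = real_of_int (2 * (pell k * apell (k+2*n+1)))"
      by (rule arg_cong)
    then show ?thesis by simp
  qed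
  have bo: "real_of_int (sigma bal k n) = apell k * pell (k+2*n+1) / 2" if "odd k"
  proof -
    have "4 * sigma bal k n = 2 * (apell k * pell (k+2*n+1))"
      using B LPo[OF that, of "2*n+1"] by (simp add: algebra_simps)
    then have "real_of_int (4 * sigma bal k n) = real_of_int (2 * (apell k * pell (k+2*n+1)))"
      by (rule arg_cong)
    then show ?thesis by simp
  qed
  have ce: "sigma lbal k n = 2 * pell k * pell (k+2*n+1)" if "even k"
    using C LQe[OF that, of "2*n+1"] by (simp add: algebra_simps)
  have co: "sigma lbal k n = apell k * apell (k+2*n+1)" if "odd k"
    using C LQo[OF that, of "2*n+1"] by (simp add: algebra_simps)
  have le: "sigma lcobal k n = 2 * pell k * pell (k+2*n)" if "even k"
    using c LQe[OF that, of "2*n"] by (simp add: algebra_simps)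
  have lo: "sigma lcobal k n = apell k * apell (k+2*n)" if "odd k"
    using c LQo[OF that, of "2*n"] by (simp add: algebra_simps)
  show ?thesis
    using r1 r3 r4 r5 p0 p2 q0 q2 be bo ce co le lo sumQ[of k n] unfolding h_def by blast
qed

end
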